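(* Let $\alpha\ge1$ and let $\beta$ be an odd positive integer, and let ${\cal C}\subseteq\mathbb{Z}_2^\alpha\times\mathbb{Z}_4^\beta$ be a separable $\mathbb{Z}_2\mathbb{Z}_4$-additive code. Then ${\cal C}$ is cyclic if and only if ${\cal C}_X$ is a binary cyclic code and ${\cal C}_Y$ is a cyclic code over $\mathbb{Z}_4$. Moreover, in this case, in polynomial representation ${\cal C}=\langle (b\mid 0),(0\mid fh+2f)\rangle$ for some $b\in\mathbb{Z}_2[x]$ dividing $x^\alpha-1$ and $f,h,g\in\mathbb{Z}_4[x]$ with $fhg=x^\beta-1$.
   Context: A $\mathbb{Z}_2\mathbb{Z}_4$-additive code is a subgroup ${\cal C}$ of $\mathbb{Z}_2^\alpha\times\mathbb{Z}_4^\beta$; vectors are written ${\bf u}=(u\mid u')$ with $u\in\mathbb{Z}_2^\alpha$, $u'\in\mathbb{Z}_4^\beta$. ${\cal C}_X$ (resp. ${\cal C}_Y$) is the projection of ${\cal C}$ onto the first $\alpha$ (resp. last $\beta$) coordinates. ${\cal C}$ is separable if ${\cal C}={\cal C}_X\times{\cal C}_Y$. ${\cal C}$ is cyclic if $\pi({\cal C})={\cal C}$, where $\pi(u_0,\dots,u_{\alpha-1}\mid u'_0,\dots,u'_{\beta-1})=(u_{\alpha-1},u_0,\dots,u_{\alpha-2}\mid u'_{\beta-1},u'_0,\dots,u'_{\beta-2})$. Vectors are identified with elements of $R_{\alpha,\beta}=\mathbb{Z}_2[x]/(x^\alpha-1)\times\mathbb{Z}_4[x]/(x^\beta-1)$ via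 $(u\mid u')\mapsto(\sum u_ix^i\mid\sum u'_ix^i)$; $R_{\alpha,\beta}$ is a $\mathbb{Z}_4[x]$-module via $p\star(b\mid a)=(\tilde pb\mid pa)$, $\tilde p$ the reduction of $p$ mod 2, and $\langle\cdot\rangle$ denotes the generated submodule. *)

theory Defs
  imports "HOL-Library.Numeral_Type" "HOL-Computational_Algebra.Polynomial"
begin

text \<open>Z2 is the numeral type 2, Z4 the numeral type 4. A vector of
  Z2^alpha x Z4^beta is a pair (u, v) of lists with length u = alpha, length v = beta.\<close>

type_synonym z2z4vec = "2 list \<times> 4 list"

definition ambient :: "nat \<Rightarrow> nat \<Rightarrow> z2z4vec set" where
  "ambient \<alpha> \<beta> = {(u, v). length u = \<alpha> \<and> length v = \<beta>}"

definition vadd :: "z2z4vec \<Rightarrow> z2z4vec \<Rightarrow> z2z4vec" where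
  "vadd x y = (map2 (+) (fst x) (fst y), map2 (+) (snd x) (snd y))"

definition vneg :: "z2z4vec \<Rightarrow> z2z4vec" where
  "vneg x = (map uminus (fst x), map uminus (snd x))"

definition vzero :: "nat \<Rightarrow> nat \<Rightarrow> z2z4vec" where
  "vzero \<alpha> \<beta> = (replicate \<alpha> 0, replicate \<beta> 0)"

definition additive_code :: "nat \<Rightarrow> nat \<Rightarrow> z2z4vec set \<Rightarrow> bool" where
  "additive_code \<alpha> \<beta> C \<longleftrightarrow> C \<subseteq> ambient \<alpha> \<beta> \<and> vzero \<alpha> \<beta> \<in> C \<and>
     (\<forall>x\<in>C. \<forall>y\<in>C. vadd x y \<in> C) \<and> (\<forall>x\<in>C. vneg x \<in> C)"

definition CX :: "z2z4vec set \<Rightarrow> 2 list set" where "CX C = fst ` C"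
definition CY :: "z2z4vec set \<Rightarrow> 4 list set" where "CY C = snd ` C"

definition separable :: "z2z4vec set \<Rightarrow> bool" where
  "separable C \<longleftrightarrow> C = CX C \<times> CY C"

definition shift :: "'a list \<Rightarrow> 'a list" where
  "shift xs = (if xs = [] then [] else last xs # butlast xs)"

definition pi_shift :: "z2z4vec \<Rightarrow> z2z4vec" where
  "pi_shift x = (shift (fst x), shift (snd x))"

definition cyclic_code :: "nat \<Rightarrow> nat \<Rightarrow> z2z4vec set \<Rightarrow> bool" where
  "cyclic_code \<alpha> \<beta> C \<longleftrightarrow> additive_code \<alpha> \<beta> C \<and> pi_shift ` C = C"

definition lin_cyclic :: "nat \<Rightarrow> 'a::comm_ring_1 list set \<Rightarrow> bool" where
  "lin_cyclic n D \<longleftrightarrow> (\<forall>u\<in>D. length u = n) \<and> replicate n 0 \<in> D \<and>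
     (\<forall>u\<in>D. \<forall>v\<in>D. map2 (+) u v \<in> D) \<and> (\<forall>u\<in>D. map uminus u \<in> D) \<and>
     shift ` D = D"

text \<open>Polynomial representation: the vector of length n corresponding to the
  class of p in R[x]/(x^n - 1).\<close>
definition cyc_red :: "nat \<Rightarrow> 'a::comm_ring_1 poly \<Rightarrow> 'a list" where
  "cyc_red n p = map (\<lambda>i. \<Sum>j\<in>{j. j \<le> degree p \<and> j mod n = i}. coeff p j) [0..<n]"

definition red2 :: "4 \<Rightarrow> 2" where "red2 z = of_int (Rep_bit0 z)"

text \<open>Z4[x]-module action on R_{alpha,beta}: p * (b | a) = (p~ b | p a).\<close>
definition star :: "nat \<Rightarrow> nat \<Rightarrow> 4 poly \<Rightarrow> z2z4vec \<Rightarrow> z2z4vec" where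
  "star \<alpha> \<beta> p x = (cyc_red \<alpha> (map_poly red2 p * Poly (fst x)), cyc_red \<beta> (p * Poly (snd x)))"

definition gen2 :: "nat \<Rightarrow> nat \<Rightarrow> z2z4vec \<Rightarrow> z2z4vec \<Rightarrow> z2z4vec set" where
  "gen2 \<alpha> \<beta> g1 g2 = {vadd (star \<alpha> \<beta> p g1) (star \<alpha> \<beta> q g2) | p q. True}"

end

theory Submission
  imports Defs "HOL-Library.Z2"
begin




abbreviation XX :: "nat \<Rightarrow> 'a::comm_ring_1 poly" where "XX n \<equiv> [:0, 1:] ^ n - 1"

lemma cr_length[simp]: "length (cyc_red n p) = n"
  by (simp add: cyc_red_def)

lemma cr_nth: "i < n \<Longrightarrow> cyc_red n p ! i = (\<Sum>j\<in>{j. j \<le> degree p \<and> j mod n = i}. coeff p j)"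
  by (simp add: cyc_red_def)

lemma XX_dvd_pow: "XX n dvd ([:0,1:] ^ (n * k) - (1::'a::comm_ring_1 poly))"
proof (induction k)
  case 0 then show ?case by simp
next
  case (Suc k)
  have "([:0,1:] ^ (n * Suc k) - (1::'a poly)) = [:0,1:]^n * ([:0,1:] ^ (n * k) - 1) + XX n"
    by (simp add: power_add algebra_simps)
  moreover have "XX n dvd [:0,1:]^n * ([:0,1:] ^ (n * k) - (1::'a poly)) + XX n" using Suc.IH by (intro dvd_add dvd_mult) auto
  ultimately show ?case by (simp only:)
qed

lemma Poly_sum_monom: "Poly xs = (\<Sum>i<length xs. monom (xs ! i) i)"
  by (rule poly_eqI) (auto simp: coeff_sum coeff_monom nth_default_def)

lemma XX_dvd_cr: 
  assumes "n \<ge> 1"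
  shows "XX n dvd (p - Poly (cyc_red n (p::'a::comm_ring_1 poly)))"
proof -
  have "Poly (cyc_red n p) = (\<Sum>i<n. monom (\<Sum>j\<in>{j. j \<le> degree p \<and> j mod n = i}. coeff p j) i)"
    by (simp add: Poly_sum_monom cr_nth)
  also have "\<dots> = (\<Sum>i<n. \<Sum>j\<in>{j\<in>{..degree p}. j mod n = i}. monom (coeff p j) (j mod n))"
    by (intro sum.cong refl) (auto simp: monom_sum)
  also have "\<dots> = (\<Sum>j\<le>degree p. monom (coeff p j) (j mod n))"
    by (rule sum.group) (use assms in auto)
  finally have 1: "Poly (cyc_red n p) = (\<Sum>j\<le>degree p. monom (coeff p j) (j mod n))" .
  have "p - Poly (cyc_red n p) = (\<Sum>j\<le>degree p. monom (coeff p j) j - monom (coeff p j) (j mod n))"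
    by (subst 1) (simp add: sum_subtractf poly_as_sum_of_monoms)
  also have "XX n dvd \<dots>"
  proof (rule dvd_sum)
    fix j
    have e: "monom (coeff p j) j - monom (coeff p j) (j mod n) =
       smult (coeff p j) ([:0,1:]^(j mod n) * ([:0,1:] ^ (n * (j div n)) - 1))"
    proof -
      have "j = j mod n + n * (j div n)" by simp
      then have "[:0,1:]^j = ([:0,1:]^(j mod n) * [:0,1:] ^ (n * (j div n)) :: 'a poly)"
        by (metis power_add)
      then show ?thesis by (simp add: monom_altdef algebra_simps smult_diff_right)
    qed
    show "XX n dvd monom (coeff p j) j - monom (coeff p j) (j mod n)"
      unfolding e by (intro dvd_smult dvd_mult XX_dvd_pow)
  qed
  finally show ?thesis .
qed

lemma degree_Poly_less: "xs \<noteq> [] \<Longrightarrow> degree (Poly xs) < length xs"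
proof -
  assume "xs \<noteq> []"
  have "degree (Poly xs) \<le> length xs - 1"
    by (rule degree_le) (auto simp: nth_default_def)
  then show ?thesis using \<open>xs \<noteq> []\<close> by (cases xs) auto
qed

lemma XX_dvd_small:
  assumes "n \<ge> 1" "XX n dvd (d::'a::comm_ring_1 poly)" "degree d < n"
  shows "d = 0"
proof (rule ccontr)
  assume "d \<noteq> 0"
  from assms(2) obtain q where q: "d = XX n * q" by (auto elim: dvdE)
  with \<open>d \<noteq> 0\<close> have "q \<noteq> 0" by auto
  have "d = monom 1 n * q - q" by (simp add: q algebra_simps monom_altdef)
  then have "coeff d (n + degree q) = lead_coeff q"
    using assms(1) by (simp add: coeff_monom_mult coeff_eq_0)
  then have "coeff d (n + degree q) \<noteq> 0" using \<open>q \<noteq> 0\<close> by simp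
  then have "n + degree q \<le> degree d" by (rule le_degree)
  with assms(3) show False by simp
qed

lemma Poly_inj: "length u = length v \<Longrightarrow> Poly u = Poly v \<Longrightarrow> u = v"
proof -
  assume l: "length u = length v" and e: "Poly u = Poly v"
  have "\<And>i. nth_default 0 u i = nth_default 0 v i" using e by (metis coeff_Poly_eq)
  then show "u = v" using l by (intro nth_equalityI) (auto simp: nth_default_def split: if_splits, metis)
qed

lemma cr_eq_iff:
  assumes "n \<ge> 1"
  shows "cyc_red n p = cyc_red n q \<longleftrightarrow> XX n dvd (p - (q::'a::comm_ring_1 poly))"
proof
  assume e: "cyc_red n p = cyc_red n q"
  have "p - q = (p - Poly (cyc_red n p)) - (q - Poly (cyc_red n q))" using e by simp
  then show "XX n dvd (p - q)" using XX_dvd_cr[OF assms, of p] XX_dvd_cr[OF assms, of q] by (metis dvd_diff)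
next
  assume d: "XX n dvd (p - q)"
  have "Poly (cyc_red n p) - Poly (cyc_red n q) = (q - Poly (cyc_red n q)) - (p - Poly (cyc_red n p)) + (p - q)"
    by simp
  then have "XX n dvd (Poly (cyc_red n p) - Poly (cyc_red n q))"
    using XX_dvd_cr[OF assms, of p] XX_dvd_cr[OF assms, of q] d by (metis dvd_diff dvd_add)
  moreover have "cyc_red n p \<noteq> []" "cyc_red n q \<noteq> []" using assms by (auto simp flip: length_greater_0_conv)
  then have "degree (Poly (cyc_red n p) - Poly (cyc_red n q)) < n"
    using degree_Poly_less[of "cyc_red n p"] degree_Poly_less[of "cyc_red n q"]
    by (metis cr_length degree_diff_le_max max_less_iff_conj order.strict_trans1) 
  ultimately have "Poly (cyc_red n p) - Poly (cyc_red n q) = 0" using XX_dvd_small assms by blast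
  then show "cyc_red n p = cyc_red n q" by (intro Poly_inj) auto
qed

lemma cr_Poly:
  assumes "n \<ge> 1" "length u = n"
  shows "cyc_red n (Poly u) = (u::'a::comm_ring_1 list)"
proof -
  have "XX n dvd (Poly u - Poly (cyc_red n (Poly u)))" by (rule XX_dvd_cr[OF assms(1)])
  moreover have "u \<noteq> []" "cyc_red n (Poly u) \<noteq> []" using assms by (auto simp flip: length_greater_0_conv)
  then have "degree (Poly u - Poly (cyc_red n (Poly u))) < n"
    using degree_Poly_less[of u] degree_Poly_less[of "cyc_red n (Poly u)"] assms
    by (metis cr_length degree_diff_le_max max_less_iff_conj order.strict_trans1) 
  ultimately have "Poly u - Poly (cyc_red n (Poly u)) = 0" using XX_dvd_small assms by blast
  then show ?thesis using assms by (intro Poly_inj) auto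
qed


lemma Poly_map2_add: "length u = length v \<Longrightarrow> Poly (map2 (+) u v) = Poly u + Poly (v::'a::comm_ring_1 list)"
  by (rule poly_eqI) (auto simp: nth_default_def)

lemma Poly_map_uminus: "Poly (map uminus u) = - Poly (u::'a::comm_ring_1 list)"
  by (rule poly_eqI) (auto simp: nth_default_def)

lemma cr_add: "n \<ge> 1 \<Longrightarrow> cyc_red n (p + q) = map2 (+) (cyc_red n p) (cyc_red n (q::'a::comm_ring_1 poly))"
proof -
  assume n: "n \<ge> 1"
  let ?w = "map2 (+) (cyc_red n p) (cyc_red n q)"
  have "cyc_red n (Poly ?w) = ?w" using n by (intro cr_Poly) auto
  moreover have "XX n dvd (p + q - Poly ?w)"
  proof -
    have "p + q - Poly ?w = (p - Poly (cyc_red n p)) + (q - Poly (cyc_red n q))"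
      by (simp add: Poly_map2_add)
    then show ?thesis using XX_dvd_cr[OF n, of p] XX_dvd_cr[OF n, of q] by (metis dvd_add)
  qed
  ultimately show ?thesis using cr_eq_iff[OF n] by metis
qed

lemma cr_uminus: "n \<ge> 1 \<Longrightarrow> cyc_red n (- p) = map uminus (cyc_red n (p::'a::comm_ring_1 poly))"
proof -
  assume n: "n \<ge> 1"
  let ?w = "map uminus (cyc_red n p)"
  have "cyc_red n (Poly ?w) = ?w" using n by (intro cr_Poly) auto
  moreover have "XX n dvd (- p - Poly ?w)"
  proof -
    have "- p - Poly ?w = - (p - Poly (cyc_red n p))"
      by (simp add: Poly_map_uminus)
    then show ?thesis using XX_dvd_cr[OF n, of p] by (metis dvd_minus_iff)
  qed
  ultimately show ?thesis using cr_eq_iff[OF n] by metis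
qed

lemma cr_0: "n \<ge> 1 \<Longrightarrow> cyc_red n (0::'a::comm_ring_1 poly) = replicate n 0"
  using cr_Poly[of n "replicate n (0::'a)"] by simp

lemma cr_XX: "n \<ge> 1 \<Longrightarrow> cyc_red n (XX n :: 'a::comm_ring_1 poly) = replicate n 0"
  by (metis cr_0 cr_eq_iff diff_zero dvd_refl)

lemma cr_XX_mult: "n \<ge> 1 \<Longrightarrow> cyc_red n (XX n * q :: 'a::comm_ring_1 poly) = replicate n 0"
  by (metis cr_0 cr_eq_iff diff_zero dvd_triv_left)

lemma cr_cong_mult: "n \<ge> 1 \<Longrightarrow> cyc_red n p = cyc_red n p' \<Longrightarrow> cyc_red n (q * p) = cyc_red n (q * (p'::'a::comm_ring_1 poly))"
  by (metis cr_eq_iff dvd_mult right_diff_distrib)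

lemma cr_Poly_cr: "n \<ge> 1 \<Longrightarrow> cyc_red n (q * Poly (cyc_red n p)) = cyc_red n (q * (p::'a::comm_ring_1 poly))"
  by (intro cr_cong_mult) (auto simp: cr_Poly)

lemma shift_len[simp]: "length (shift xs) = length xs"
  by (cases xs rule: rev_cases) (auto simp: shift_def)

lemma Poly_shift: "u \<noteq> [] \<Longrightarrow> [:0,1:] * Poly u - Poly (shift u) = smult (last u) (XX (length u) :: 'a::comm_ring_1 poly)"
proof -
  assume "u \<noteq> []"
  then obtain v a where u: "u = v @ [a]" by (cases u rule: rev_cases) auto
  have "[:0,1:] * Poly u = [:0,1:] * Poly v + smult a ([:0,1:] ^ length u)"
    by (simp add: u Poly_append monom_altdef algebra_simps)
  moreover have "Poly (shift u) = [:a:] + [:0,1:] * Poly v"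
    by (simp add: u shift_def)
  ultimately show ?thesis by (simp add: u algebra_simps smult_diff_right)
qed

lemma cr_shift: "n \<ge> 1 \<Longrightarrow> cyc_red n ([:0,1:] * p) = shift (cyc_red n (p::'a::comm_ring_1 poly))"
proof -
  assume n: "n \<ge> 1"
  let ?u = "cyc_red n p"
  have ne: "?u \<noteq> []" using n by (auto simp flip: length_greater_0_conv)
  have "cyc_red n (Poly (shift ?u)) = shift ?u" using n by (intro cr_Poly) auto
  moreover have "XX n dvd ([:0,1:] * p - Poly (shift ?u))"
  proof -
    have "[:0,1:] * p - Poly (shift ?u) = [:0,1:] * (p - Poly ?u) + ([:0,1:] * Poly ?u - Poly (shift ?u))"
      by (simp add: algebra_simps)
    also have "\<dots> = [:0,1:] * (p - Poly ?u) + smult (last ?u) (XX n)"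
      using Poly_shift[OF ne] by simp
    finally show ?thesis using XX_dvd_cr[OF n, of p] by (metis dvd_add dvd_mult dvd_smult dvd_refl)
  qed
  ultimately show ?thesis using cr_eq_iff[OF n] by metis
qed


definition is_ideal :: "'a::comm_ring_1 poly set \<Rightarrow> bool" where
  "is_ideal J \<longleftrightarrow> 0 \<in> J \<and> (\<forall>x\<in>J. \<forall>y\<in>J. x + y \<in> J) \<and> (\<forall>x\<in>J. \<forall>q. q * x \<in> J)"

lemma is_idealD:
  assumes "is_ideal J"
  shows "0 \<in> J" "x \<in> J \<Longrightarrow> y \<in> J \<Longrightarrow> x + y \<in> J" "x \<in> J \<Longrightarrow> q * x \<in> J"
    "x \<in> J \<Longrightarrow> x * q \<in> J" "x \<in> J \<Longrightarrow> y \<in> J \<Longrightarrow> x - y \<in> J"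
proof -
  show "0 \<in> J" "x \<in> J \<Longrightarrow> y \<in> J \<Longrightarrow> x + y \<in> J" "x \<in> J \<Longrightarrow> q * x \<in> J"
    using assms by (auto simp: is_ideal_def)
  then show "x \<in> J \<Longrightarrow> x * q \<in> J" by (simp add: mult.commute)
  show "x \<in> J \<Longrightarrow> y \<in> J \<Longrightarrow> x - y \<in> J"
  proof -
    assume "x \<in> J" "y \<in> J"
    then have "x + (-1) * y \<in> J" using assms unfolding is_ideal_def by blast
    moreover have "x + (-1) * y = x - y" by simp
    ultimately show ?thesis by simp
  qed
qed

lemma bit0_of_nat: "\<exists>k. (c::'a::finite bit0) = of_nat k"
proof (cases c rule: bit0_cases)
  case (of_int z)
  then show ?thesis by (metis of_int_of_nat_eq nonneg_int_cases)
qed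

lemma lc_ideal:
  fixes D :: "'a::finite bit0 list set"
  assumes n: "n \<ge> 1" and lc: "lin_cyclic n D"
  shows "is_ideal {p. cyc_red n p \<in> D}"
proof -
  have z: "cyc_red n 0 \<in> D" using lc n by (simp add: lin_cyclic_def cr_0)
  have a: "cyc_red n (p + q) \<in> D" if "cyc_red n p \<in> D" "cyc_red n q \<in> D" for p q
    using that lc n by (simp add: lin_cyclic_def cr_add)
  have x: "cyc_red n (pCons 0 p) \<in> D" if "cyc_red n p \<in> D" for p
  proof -
    have "cyc_red n ([:0,1:] * p) = shift (cyc_red n p)" by (rule cr_shift[OF n])
    moreover have "[:0,1:] * p = pCons 0 p" by simp
    ultimately show ?thesis using that lc by (auto simp: lin_cyclic_def)
  qed
  have sm: "cyc_red n (smult (of_nat k) p) \<in> D" if "cyc_red n p \<in> D" for p k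
  proof (induction k)
    case 0 then show ?case using z by simp
  next
    case (Suc k)
    have "smult (of_nat (Suc k)) p = p + smult (of_nat k) p" by (simp add: smult_add_left)
    then show ?case using a[OF that Suc] by simp
  qed
  have m: "cyc_red n (q * p) \<in> D" if "cyc_red n p \<in> D" for p q
  proof (induction q rule: pCons_induct)
    case 0 then show ?case using z by simp
  next
    case (pCons c q)
    obtain k where c: "c = of_nat k" using bit0_of_nat by blast
    have "pCons c q * p = smult c p + pCons 0 (q * p)" by simp
    then show ?case using a[OF sm[OF that, of k] x[OF pCons(2)]] c by simp
  qed
  show ?thesis unfolding is_ideal_def using z a m by auto
qed

lemma lc_image:
  assumes n: "n \<ge> 1" and lc: "lin_cyclic n D"
  shows "D = cyc_red n ` {p. cyc_red n p \<in> (D::'a::comm_ring_1 list set)}"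
proof
  show "D \<subseteq> cyc_red n ` {p. cyc_red n p \<in> D}"
  proof
    fix u assume "u \<in> D"
    then have "length u = n" using lc by (auto simp: lin_cyclic_def)
    then have "cyc_red n (Poly u) = u" using n by (simp add: cr_Poly)
    then show "u \<in> cyc_red n ` {p. cyc_red n p \<in> D}" using \<open>u \<in> D\<close> by (metis (mono_tags) image_eqI mem_Collect_eq)
  qed
qed auto


lemma ex2: "(z::2) = 0 \<or> z = 1"
proof (cases z rule: bit0_cases)
  case (of_int k)
  then have "k = 0 \<or> k = 1" by auto
  then show ?thesis using of_int by auto
qed

lemma ex4: "(z::4) = 0 \<or> z = 1 \<or> z = 2 \<or> z = 3"
proof (cases z rule: bit0_cases)
  case (of_int k)
  then have "k = 0 \<or> k = 1 \<or> k = 2 \<or> k = 3" by auto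
  then show ?thesis using of_int by auto
qed

lemma ideal_gen2:
  assumes J: "is_ideal (J :: 2 poly set)"
  shows "\<exists>d\<in>J. \<forall>z\<in>J. d dvd z"
proof (cases "J \<subseteq> {0}")
  case True
  then show ?thesis using is_idealD(1)[OF J] by (intro bexI[of _ 0]) auto
next
  case False
  then obtain x where x: "x \<in> J" "x \<noteq> 0" by auto
  define m where "m = (LEAST k. \<exists>x\<in>J. x \<noteq> 0 \<and> degree x = k)"
  have "\<exists>x\<in>J. x \<noteq> 0 \<and> degree x = m"
    unfolding m_def by (rule LeastI[of _ "degree x"]) (use x in auto)
  then obtain d where d: "d \<in> J" "d \<noteq> 0" "degree d = m" by auto
  have mn: "m \<le> degree y" if "y \<in> J" "y \<noteq> 0" for y
    unfolding m_def by (rule Least_le) (use that in auto)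
  have lc: "coeff d (degree d) = 1" using ex2[of "coeff d (degree d)"] d(2) by auto
  show ?thesis
  proof (intro bexI[OF _ d(1)] ballI)
    fix z assume z: "z \<in> J"
    obtain q r where qr: "pseudo_divmod z d = (q, r)" by fastforce
    note pd = pseudo_divmod[OF d(2) qr]
    have zq: "z = d * q + r" using pd(1) lc by simp
    have "r = z - d * q" using zq by simp
    then have "r \<in> J" using is_idealD[OF J] z d(1) by auto
    have "r = 0"
    proof (rule ccontr)
      assume "r \<noteq> 0"
      then have "degree r < degree d" using pd(2) by auto
      with mn[OF \<open>r \<in> J\<close> \<open>r \<noteq> 0\<close>] d(3) show False by simp
    qed
    then show "d dvd z" using zq by simp
  qed
qed

lemma binary_gen:
  fixes D :: "2 list set"
  assumes n: "n \<ge> 1" and lc: "lin_cyclic n D"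
  shows "\<exists>b. b dvd XX n \<and> D = {cyc_red n (p * b) | p. True}"
proof -
  let ?J = "{p. cyc_red n p \<in> D}"
  have J: "is_ideal ?J" by (rule lc_ideal[OF n lc])
  obtain d where d: "d \<in> ?J" "\<forall>z\<in>?J. d dvd z" using ideal_gen2[OF J] by blast
  have "replicate n 0 \<in> D" using lc by (simp add: lin_cyclic_def)
  then have "XX n \<in> ?J" using cr_XX[OF n] by (metis (mono_tags) mem_Collect_eq)
  then have "d dvd XX n" using d by blast
  moreover have "D = {cyc_red n (p * d) | p. True}"
  proof
    show "D \<subseteq> {cyc_red n (p * d) | p. True}"
    proof
      fix u assume "u \<in> D"
      then obtain p where p: "p \<in> ?J" "u = cyc_red n p" using lc_image[OF n lc] by blast
      then obtain k where "p = d * k" using d by (auto elim: dvdE)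
      then show "u \<in> {cyc_red n (p * d) | p. True}" using p by (auto simp: mult.commute)
    qed
    show "{cyc_red n (p * d) | p. True} \<subseteq> D"
      using is_idealD(4)[OF J d(1)] by (auto simp: mult.commute)
  qed
  ultimately show ?thesis by blast
qed

lemma map_poly_hom_add:
  assumes "f 0 = 0" "\<And>a b. f (a + b) = f a + f b"
  shows "map_poly f (p + q) = map_poly f p + map_poly f q"
  by (rule poly_eqI) (simp add: coeff_map_poly assms)

lemma map_poly_hom_mult:
  fixes f :: "'a::comm_ring_1 \<Rightarrow> 'b::comm_ring_1"
  assumes "f 0 = 0" "\<And>a b. f (a + b) = f a + f b" "\<And>a b. f (a * b) = f a * f b"
  shows "map_poly f (p * q) = map_poly f p * map_poly f q"
proof (induction p rule: pCons_induct)
  case 0 then show ?case by (simp add: assms)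
next
  case (pCons a p)
  have "map_poly f (pCons a p * q) = map_poly f (smult a q) + map_poly f (pCons 0 (p * q))"
    by (simp add: map_poly_hom_add[OF assms(1,2)])
  also have "\<dots> = smult (f a) (map_poly f q) + pCons 0 (map_poly f p * map_poly f q)"
    by (simp add: map_poly_smult[OF assms(1,3)] map_poly_pCons[of f, OF assms(1)] pCons.IH assms(1))
  also have "\<dots> = map_poly f (pCons a p) * map_poly f q"
    by (simp add: map_poly_pCons[of f, OF assms(1)] assms)
  finally show ?case .
qed

definition phi :: "2 \<Rightarrow> bit" where "phi z = (if z = 0 then 0 else 1)"

lemma phi_0: "phi 0 = 0" and phi_1: "phi 1 = 1" by (simp_all add: phi_def)

lemma phi_add: "phi (a + b) = phi a + phi b"
  using ex2[of a] ex2[of b] by (auto simp: phi_def)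

lemma phi_mult: "phi (a * b) = phi a * phi b"
  using ex2[of a] ex2[of b] by (auto simp: phi_def)

lemma phi_nz: "z \<noteq> 0 \<Longrightarrow> phi z \<noteq> 0" by (simp add: phi_def)

lemma mphi_mult: "map_poly phi (p * q) = map_poly phi p * map_poly phi q"
  by (rule map_poly_hom_mult[OF phi_0 phi_add phi_mult])

lemma mphi_pow: "map_poly phi (p ^ k) = map_poly phi p ^ k"
  by (induction k) (simp_all add: mphi_mult phi_1)

lemma mphi_XX: "map_poly phi (XX n) = XX n"
proof -
  have m: "map_poly phi (- p) = - map_poly phi p" for p
    by (rule poly_eqI) (simp add: coeff_map_poly phi_def)
  have "map_poly phi (XX n) = map_poly phi ([:0,1:]^n) + map_poly phi (- 1)"
    by (simp flip: map_poly_hom_add[OF phi_0 phi_add])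
  also have "\<dots> = XX n" by (simp add: mphi_pow m phi_0 phi_1 map_poly_pCons)
  finally show ?thesis .
qed

lemma sqf_bit:
  fixes d k :: "bit poly"
  assumes n: "odd n" and k: "XX n = d * d * k"
  shows "d dvd 1"
proof -
  have "pderiv (XX n :: bit poly) = d * (d * pderiv k + k * pderiv d + k * pderiv d)"
    by (subst k) (simp add: pderiv_mult algebra_simps)
  then have d1: "d dvd pderiv (XX n :: bit poly)" by simp
  have n0: "n = Suc (n - 1)" using n by (cases n) auto
  have on: "(of_nat n :: bit) = 1"
  proof -
    obtain m where "n = 2 * m + 1" using n by (metis oddE)
    then show ?thesis by simp
  qed
  have on': "(of_nat (Suc (n - 1)) :: bit) = 1" using on n0 by simp
  have "pderiv ([:0,1:]^Suc (n-1) :: bit poly) = smult (of_nat (Suc (n-1))) ([:0,1:]^(n-1)) * pderiv [:0,1:]"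
    by (rule pderiv_power_Suc)
  then have "pderiv ([:0,1:]^Suc (n-1) :: bit poly) = [:0,1:]^(n-1)"
    unfolding on' by (simp add: pderiv_pCons)
  then have "pderiv ([:0,1:]^n :: bit poly) = [:0,1:]^(n-1)" using n0 by simp
  then have "pderiv (XX n :: bit poly) = [:0,1:] ^ (n - 1)"
    by (simp add: pderiv_diff)
  with d1 have d2: "d dvd [:0,1:] ^ (n - 1)" by simp
  have "[:0,1:] ^ n = [:0,1:] * [:0,1:] ^ (n - 1 :: nat)" by (subst n0) simp
  with d2 have "d dvd [:0,1:] ^ n" by (metis dvd_mult)
  moreover have "d dvd XX n" using k by simp
  ultimately have "d dvd ([:0,1:] ^ n - XX n)" by (rule dvd_diff)
  then show "d dvd 1" by simp
qed

lemma XX_nz: "n \<ge> 1 \<Longrightarrow> (XX n :: 'a::comm_ring_1 poly) \<noteq> 0"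
proof
  assume "n \<ge> 1" "(XX n :: 'a poly) = 0"
  then have "coeff (XX n :: 'a poly) n = 0" by simp
  moreover have "coeff (XX n :: 'a poly) n = 1" using \<open>n \<ge> 1\<close>
    by (simp add: monom_altdef[of 1, simplified, symmetric])
  ultimately show False by simp
qed

lemma sqf_bezout:
  fixes A B :: "2 poly"
  assumes n: "odd n" and dv: "A * B dvd XX n"
  shows "\<exists>U V. U * A + V * B = 1"
proof -
  let ?J = "{U * A + V * B | U V. True}"
  have J: "is_ideal ?J" unfolding is_ideal_def
  proof (intro conjI ballI allI)
    show "0 \<in> ?J" by (rule CollectI, rule exI[of _ 0], rule exI[of _ 0]) simp
    fix x y assume "x \<in> ?J" "y \<in> ?J"
    then obtain U V U' V' where "x = U * A + V * B" "y = U' * A + V' * B" by blast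
    then have "x + y = (U + U') * A + (V + V') * B" by (simp add: algebra_simps)
    then show "x + y \<in> ?J" by blast
  next
    fix x q assume "x \<in> ?J"
    then obtain U V where "x = U * A + V * B" by blast
    then have "q * x = (q * U) * A + (q * V) * B" by (simp add: algebra_simps)
    then show "q * x \<in> ?J" by blast
  qed
  obtain d where d: "d \<in> ?J" "\<forall>z\<in>?J. d dvd z" using ideal_gen2[OF J] by blast
  have "A \<in> ?J" by (rule CollectI, rule exI[of _ 1], rule exI[of _ 0]) simp
  then have "d dvd A" using d by blast
  have "B \<in> ?J" by (rule CollectI, rule exI[of _ 0], rule exI[of _ 1]) simp
  then have "d dvd B" using d by blast
  have "d * d dvd XX n" using \<open>d dvd A\<close> \<open>d dvd B\<close> dv by (meson dvd_trans mult_dvd_mono)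
  then obtain k where k: "XX n = d * d * k" by (auto elim: dvdE)
  have n1: "n \<ge> 1" using n by (cases n) auto
  have "d \<noteq> 0" using k XX_nz[OF n1] by auto
  have "map_poly phi (XX n) = map_poly phi d * map_poly phi d * map_poly phi k"
    by (subst k) (simp add: mphi_mult)
  then have "XX n = map_poly phi d * map_poly phi d * map_poly phi k" by (simp add: mphi_XX)
  then have "map_poly phi d dvd 1" by (rule sqf_bit[OF n])
  then obtain c where "map_poly phi d = [:c:]" by (auto simp: is_unit_poly_iff)
  then have "degree (map_poly phi d) = 0" by simp
  then have dg: "degree d = 0" by (simp add: degree_map_poly phi_nz)
  then have "d = [:coeff d 0:]" by (metis degree_0_id)
  moreover have "coeff d 0 \<noteq> 0" using \<open>d \<noteq> 0\<close> dg by (metis leading_coeff_0_iff)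
  then have "coeff d 0 = 1" using ex2 by blast
  ultimately have "d = 1" by (simp add: one_pCons)
  then show ?thesis using d(1) by auto
qed


lemma red2_vals: "red2 0 = 0" "red2 1 = 1" "red2 2 = 0" "red2 3 = 1"
  by (simp_all add: red2_def bit0.Rep_0 bit0.Rep_1 bit0.Rep_numeral)

lemma four_poly_eq_0: "(4::4 poly) = 0"
proof -
  have "(4::4 poly) = [:4:]" by (rule numeral_poly)
  also have "(4::4) = 0" by simp
  then have "[:(4::4):] = [:0:]" by (simp only:)
  finally show ?thesis by simp
qed

lemma of_int_mod4: "(of_int (k mod 4) :: 2) = of_int k"
proof -
  have "(k mod 4) mod 2 = k mod 2" by (simp add: mod_mod_cancel)
  then show ?thesis by (simp add: bit0.of_int_eq)
qed

lemma red2_add: "red2 (a + b) = red2 a + red2 b"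
proof -
  have "Rep_bit0 (a + b :: 4) = (Rep_bit0 a + Rep_bit0 b) mod 4"
    by (simp add: bit0.add_def bit0.Abs_inverse)
  then show ?thesis by (simp add: red2_def of_int_mod4)
qed

lemma red2_mult: "red2 (a * b) = red2 a * red2 b"
proof -
  have "Rep_bit0 (a * b :: 4) = (Rep_bit0 a * Rep_bit0 b) mod 4"
    by (simp add: bit0.mult_def bit0.Abs_inverse)
  then show ?thesis by (simp add: red2_def of_int_mod4)
qed


lemma red2_0: "red2 0 = 0" and red2_1: "red2 1 = 1" using red2_vals by auto

abbreviation rd :: "4 poly \<Rightarrow> 2 poly" where "rd \<equiv> map_poly red2"

definition lift2 :: "2 \<Rightarrow> 4" where "lift2 z = (if z = 0 then 0 else 1)"

abbreviation lf :: "2 poly \<Rightarrow> 4 poly" where "lf \<equiv> map_poly lift2"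

lemma red2_lift2: "red2 (lift2 z) = z"
  using ex2[of z] by (auto simp: lift2_def red2_vals)

lemma rd_lf: "rd (lf p) = p"
proof -
  have "rd (lf p) = map_poly (red2 \<circ> lift2) p"
    by (rule map_poly_map_poly) (simp_all add: lift2_def red2_vals)
  also have "red2 \<circ> lift2 = id" by (auto simp: red2_lift2)
  finally show ?thesis by simp
qed

lemma rd_add: "rd (p + q) = rd p + rd q"
  by (rule map_poly_hom_add[OF red2_0 red2_add])

lemma rd_mult: "rd (p * q) = rd p * rd q"
  by (rule map_poly_hom_mult[OF red2_0 red2_add red2_mult])

lemma red2_uminus: "red2 (- a) = - red2 a"
  by (metis add_eq_0_iff2 red2_add red2_0 add.right_inverse)

lemma rd_uminus: "rd (- p) = - rd p"
  by (rule poly_eqI) (simp add: coeff_map_poly red2_0 red2_uminus)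

lemma rd_diff: "rd (p - q) = rd p - rd q"
  by (metis diff_conv_add_uminus rd_add rd_uminus)

lemma rd_1: "rd 1 = 1" by (simp add: red2_1)

lemma rd_2: "rd 2 = 0"
proof -
  have "rd 2 = rd (1 + 1)" by simp
  also have "\<dots> = 1 + 1" by (simp only: rd_add rd_1)
  also have "(1 + 1 :: 2 poly) = 0"
  proof (rule poly_eqI)
    fix i show "coeff (1 + 1 :: 2 poly) i = coeff 0 i" by (simp only: coeff_add) simp
  qed
  finally show ?thesis .
qed

lemma rd_pow: "rd (p ^ k) = rd p ^ k"
  by (induction k) (simp_all add: rd_mult rd_1)

lemma rd_XX: "rd (XX n) = XX n"
proof -
  have "rd [:0,1:] = [:0,1:]" by (simp add: red2_vals map_poly_pCons)
  then show ?thesis by (simp add: rd_diff rd_pow rd_1)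
qed

lemma rd_eq_K:
  assumes "rd Y = rd Z"
  shows "\<exists>E. Y = Z + 2 * E"
proof -
  define D where "D = Y - Z"
  have "rd D = 0" using assms by (simp add: D_def rd_diff)
  then have c: "red2 (coeff D i) = 0" for i by (metis coeff_0 coeff_map_poly red2_0)
  have c2: "coeff D i = 0 \<or> coeff D i = 2" for i
    using c[of i] ex4[of "coeff D i"] by (auto simp: red2_vals)
  define E where "E = map_poly (\<lambda>z. if z = 2 then 1 else 0 :: 4) D"
  have "2 * E = D"
  proof (rule poly_eqI)
    fix i
    show "coeff (2 * E) i = coeff D i"
      using c2[of i] by (auto simp: E_def numeral_mult_conv_smult coeff_map_poly)
  qed
  then have "Y = Z + 2 * E" by (metis D_def add.commute diff_add_cancel)
  then show ?thesis by blast
qed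

lemma rd_eq_K2:
  assumes "rd Y = rd Z"
  shows "2 * Y = 2 * Z"
proof -
  obtain E where "Y = Z + 2 * E" using rd_eq_K[OF assms] by blast
  then have "2 * Y = 2 * Z + (2 * 2) * E" by (simp add: algebra_simps)
  then show ?thesis by (simp add: four_poly_eq_0)
qed

lemma hensel:
  fixes P :: "4 poly" and A B :: "2 poly"
  assumes P: "rd P = A * B" and bz: "U * A + V * B = 1"
  shows "\<exists>F G. F * G = P \<and> rd F = A \<and> rd G = B"
proof -
  define F0 where "F0 = lf A"
  define G0 where "G0 = lf B"
  have "rd (F0 * G0) = rd P" by (simp add: F0_def G0_def rd_mult rd_lf P)
  then obtain E where E: "P = F0 * G0 + 2 * E" using rd_eq_K by metis
  define W where "W = rd E"
  define F where "F = F0 + 2 * lf (W * V)"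
  define G where "G = G0 + 2 * lf (W * U)"
  have "rd (F0 * lf (W * U) + G0 * lf (W * V)) = W * (U * A + V * B)"
    by (simp add: F0_def G0_def rd_add rd_mult rd_lf algebra_simps)
  also have "\<dots> = rd E" by (simp add: bz W_def)
  finally have "2 * (F0 * lf (W * U) + G0 * lf (W * V)) = 2 * E" by (rule rd_eq_K2)
  moreover have "F * G = F0 * G0 + 2 * (F0 * lf (W * U) + G0 * lf (W * V)) + (2 * 2) * (lf (W * V) * lf (W * U))"
    by (simp add: F_def G_def algebra_simps)
  ultimately have "F * G = P" using E by (simp add: four_poly_eq_0)
  moreover have "rd F = A" by (simp add: F_def F0_def rd_add rd_mult rd_2 rd_lf)
  moreover have "rd G = B" by (simp add: G_def G0_def rd_add rd_mult rd_2 rd_lf)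
  ultimately show ?thesis by blast
qed



lemma z4_gen:
  fixes D :: "4 list set"
  assumes n: "odd n" and lc: "lin_cyclic n D"
  shows "\<exists>f h g. f * h * g = XX n \<and> D = {cyc_red n (q * (f * h + 2 * f)) | q. True}"
proof -
  have n1: "n \<ge> 1" using n by (cases n) auto
  define I where "I = {p. cyc_red n p \<in> D}"
  have I: "is_ideal I" unfolding I_def by (rule lc_ideal[OF n1 lc])
  note Id = is_idealD[OF I]
  have "replicate n 0 \<in> D" using lc by (simp add: lin_cyclic_def)
  then have XXI: "XX n \<in> I" using cr_XX[OF n1] unfolding I_def by (metis (mono_tags) mem_Collect_eq)
  define Res where "Res = rd ` I"
  define Tor where "Tor = {rd p | p. 2 * p \<in> I}"
  have Res: "is_ideal Res" unfolding is_ideal_def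
  proof (intro conjI ballI allI)
    show "0 \<in> Res" unfolding Res_def using Id(1) by (metis image_eqI map_poly_0)
    fix x y assume "x \<in> Res" "y \<in> Res"
    then obtain x' y' where "x' \<in> I" "y' \<in> I" "x = rd x'" "y = rd y'" unfolding Res_def by blast
    then show "x + y \<in> Res" unfolding Res_def using Id(2) by (metis image_eqI rd_add)
  next
    fix x q assume "x \<in> Res"
    then obtain x' where "x' \<in> I" "x = rd x'" unfolding Res_def by blast
    then show "q * x \<in> Res" unfolding Res_def using Id(3) by (metis image_eqI rd_mult rd_lf)
  qed
  have Tor: "is_ideal Tor" unfolding is_ideal_def
  proof (intro conjI ballI allI)
    show "0 \<in> Tor" unfolding Tor_def using Id(1) by (metis (mono_tags, lifting) mem_Collect_eq map_poly_0 mult_zero_right)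
    fix x y assume "x \<in> Tor" "y \<in> Tor"
    then obtain x' y' where "2 * x' \<in> I" "2 * y' \<in> I" "x = rd x'" "y = rd y'" unfolding Tor_def by blast
    moreover have "2 * (x' + y') = 2 * x' + 2 * y'" by (simp add: algebra_simps)
    ultimately show "x + y \<in> Tor" unfolding Tor_def using Id(2) by (metis (mono_tags, lifting) mem_Collect_eq rd_add)
  next
    fix x q assume "x \<in> Tor"
    then obtain x' where "2 * x' \<in> I" "x = rd x'" unfolding Tor_def by blast
    moreover have "2 * (lf q * x') = lf q * (2 * x')" by (simp add: algebra_simps)
    ultimately show "q * x \<in> Tor" unfolding Tor_def using Id(3) by (metis (mono_tags, lifting) mem_Collect_eq rd_mult rd_lf)
  qed
  obtain r where r: "r \<in> Res" "\<forall>z\<in>Res. r dvd z" using ideal_gen2[OF Res] by blast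
  obtain t where t: "t \<in> Tor" "\<forall>z\<in>Tor. t dvd z" using ideal_gen2[OF Tor] by blast
  have "XX n \<in> Res" unfolding Res_def using XXI rd_XX by (metis image_eqI)
  then obtain s where s: "XX n = r * s" using r by (auto elim: dvdE)
  have "r \<in> Tor"
  proof -
    obtain p where "p \<in> I" "r = rd p" using r(1) unfolding Res_def by blast
    then show ?thesis unfolding Tor_def using Id(3) by blast
  qed
  then obtain u where u: "r = t * u" using t by (auto elim: dvdE)
  have X2: "XX n = t * u * s" using s u by simp
  have d1: "t * u * s dvd XX n" unfolding X2 by simp
  have d2: "t * u dvd XX n" unfolding X2 by (rule dvd_triv_left)
  have "XX n = (t * s) * u" unfolding X2 by (simp add: ac_simps)
  then have d3: "t * s dvd XX n" by (metis dvd_triv_left)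
  have "XX n = t * (u * s)" unfolding X2 by (simp add: ac_simps)
  then have d4: "u * s dvd XX n" by (metis dvd_triv_right)
  obtain U1 V1 where bz1: "U1 * (t * u) + V1 * s = 1" using sqf_bezout[OF n d1] by blast
  obtain U2 V2 where bz2: "U2 * t + V2 * u = 1" using sqf_bezout[OF n d2] by blast
  obtain U3 V3 where bz3: "U3 * t + V3 * s = 1" using sqf_bezout[OF n d3] by blast
  obtain U4 V4 where bz4: "U4 * u + V4 * s = 1" using sqf_bezout[OF n d4] by blast
  have "rd (XX n) = (t * u) * s" using X2 rd_XX by simp
  from hensel[OF this bz1] obtain F' g where Fg: "F' * g = XX n" "rd F' = t * u" "rd g = s" by blast
  from hensel[OF Fg(2) bz2] obtain f h where fh: "f * h = F'" "rd f = t" "rd h = u" by blast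
  have fhg: "f * h * g = XX n" using Fg fh by simp
  have f2I: "2 * f \<in> I"
  proof -
    obtain p0 where "t = rd p0" "2 * p0 \<in> I" using t(1) unfolding Tor_def by blast
    moreover have "2 * p0 = 2 * f" using calculation fh(2) by (metis rd_eq_K2)
    ultimately show ?thesis by simp
  qed
  have tdvd: "rd e = t * m \<Longrightarrow> 2 * e \<in> I" for e m
  proof -
    assume "rd e = t * m"
    then have "rd e = rd (f * lf m)" by (simp add: rd_mult rd_lf fh(2))
    then have "2 * e = 2 * (f * lf m)" by (rule rd_eq_K2)
    also have "\<dots> = lf m * (2 * f)" by (simp add: algebra_simps)
    finally show "2 * e \<in> I" using Id(3)[OF f2I] by simp
  qed
  have fhI: "f * h \<in> I"
  proof -
    obtain p1 where p1: "p1 \<in> I" "r = rd p1" using r(1) unfolding Res_def by blast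
    then have "rd p1 = rd (f * h)" using u fh(1) Fg(2) by simp
    then obtain e where e: "p1 = f * h + 2 * e" using rd_eq_K by blast
    have "p1 * g = XX n + 2 * (e * g)" using e fhg by (simp add: algebra_simps)
    then have "2 * (e * g) = p1 * g - XX n" by simp
    then have "2 * (e * g) \<in> I" using Id(4)[OF p1(1)] XXI Id(5) by metis
    then have "rd (e * g) \<in> Tor" unfolding Tor_def by blast
    then have "t dvd rd e * s" using t(2) Fg(3) by (simp add: rd_mult)
    moreover have "rd e = rd e * U3 * t + V3 * (rd e * s)"
    proof -
      have "rd e = rd e * (U3 * t + V3 * s)" using bz3 by simp
      then show ?thesis by (simp add: algebra_simps)
    qed
    ultimately have "t dvd rd e" by (metis dvd_add dvd_mult dvd_triv_right)
    then obtain m where "rd e = t * m" by (auto elim: dvdE)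
    then have "2 * e \<in> I" by (rule tdvd)
    moreover have "f * h = p1 - 2 * e" using e by simp
    ultimately show ?thesis using Id(5)[OF p1(1)] by simp
  qed
  define a where "a = f * h + 2 * f"
  have aI: "a \<in> I" unfolding a_def using Id(2)[OF fhI f2I] .
  obtain w where w: "lf U4 * h + lf V4 * g = 1 + 2 * w"
  proof -
    have "rd (lf U4 * h + lf V4 * g) = rd 1" using bz4 fh(3) Fg(3) by (simp add: rd_add rd_mult rd_lf rd_1)
    then show ?thesis using rd_eq_K that by blast
  qed
  define Q where "Q = 2 * lf U4 + lf V4 * g"
  have two_f: "2 * f = a * Q - XX n * lf V4"
  proof -
    have "2 * f = 2 * f * (1 + 2 * w)"
    proof -
      have "2 * f * (1 + 2 * w) = 2 * f + 4 * (f * w)" by (simp add: algebra_simps)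
      then show ?thesis by (simp add: four_poly_eq_0)
    qed
    also have "\<dots> = 2 * f * (lf U4 * h + lf V4 * g)" by (simp only: w)
    also have "\<dots> = lf U4 * (2 * (f * h)) + lf V4 * (2 * f * g)" by (simp add: algebra_simps)
    also have "2 * (f * h) = 2 * a"
    proof -
      have "2 * a = 2 * (f * h) + 4 * f" by (simp add: a_def algebra_simps)
      then show ?thesis by (simp add: four_poly_eq_0)
    qed
    also have "2 * f * g = a * g - XX n" by (simp add: a_def fhg[symmetric] algebra_simps)
    finally show ?thesis by (simp add: Q_def algebra_simps)
  qed
  have "D = {cyc_red n (q * a) | q. True}"
  proof
    show "{cyc_red n (q * a) | q. True} \<subseteq> D" using Id(3)[OF aI] unfolding I_def by auto
    show "D \<subseteq> {cyc_red n (q * a) | q. True}"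
    proof
      fix x assume "x \<in> D"
      then obtain c where c: "c \<in> I" "x = cyc_red n c" using lc_image[OF n1 lc] unfolding I_def by blast
      then have "rd c \<in> Res" unfolding Res_def by blast
      then obtain k where "rd c = t * u * k" using r(2) u by (auto elim: dvdE)
      then have "rd c = rd (f * h * lf k)" using fh(1) Fg(2) by (simp add: rd_mult rd_lf)
      then obtain e where e: "c = f * h * lf k + 2 * e" using rd_eq_K by blast
      have "2 * e = c - f * h * lf k" using e by simp
      then have "2 * e \<in> I" using Id(5)[OF c(1) Id(4)[OF fhI]] by simp
      then have "rd e \<in> Tor" unfolding Tor_def by blast
      then obtain m where "rd e = t * m" using t(2) by (auto elim: dvdE)
      then have "rd e = rd (f * lf m)" using fh by (simp add: rd_mult rd_lf)
      then have "2 * e = 2 * f * lf m" using rd_eq_K2 by (metis mult.assoc)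
      then have "c = a * lf k + 2 * f * (lf m - lf k)" using e by (simp add: a_def algebra_simps)
      also have "\<dots> = a * lf k + (a * Q - XX n * lf V4) * (lf m - lf k)"
        by (simp only: two_f)
      also have "\<dots> = a * (lf k + Q * (lf m - lf k)) - XX n * (lf V4 * (lf m - lf k))"
        by (simp add: algebra_simps)
      finally have ceq: "c = a * (lf k + Q * (lf m - lf k)) - XX n * (lf V4 * (lf m - lf k))" .
      have "c - (lf k + Q * (lf m - lf k)) * a = XX n * (- (lf V4 * (lf m - lf k)))"
        by (subst ceq) (simp add: algebra_simps)
      then have "XX n dvd c - (lf k + Q * (lf m - lf k)) * a" by (metis dvd_triv_left)
      then have "x = cyc_red n ((lf k + Q * (lf m - lf k)) * a)" using c(2) cr_eq_iff[OF n1] by blast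
      then show "x \<in> {cyc_red n (q * a) | q. True}" by blast
    qed
  qed
  then show ?thesis using fhg unfolding a_def by blast
qed


lemma map2_add_zero_r: "map2 (+) xs (replicate (length xs) 0) = (xs :: 'a::comm_ring_1 list)"
  by (induction xs) auto

lemma map2_add_zero_l: "map2 (+) (replicate (length xs) 0) xs = (xs :: 'a::comm_ring_1 list)"
  by (induction xs) auto

lemma gen2_eq:
  assumes a1: "\<alpha> \<ge> 1" and b1: "\<beta> \<ge> 1"
  shows "gen2 \<alpha> \<beta> (cyc_red \<alpha> b, replicate \<beta> 0) (replicate \<alpha> 0, cyc_red \<beta> a) =
    {cyc_red \<alpha> (p * b) | p. True} \<times> {cyc_red \<beta> (q * a) | q. True}"
proof -
  have st1: "star \<alpha> \<beta> p (cyc_red \<alpha> b, replicate \<beta> 0) = (cyc_red \<alpha> (rd p * b), replicate \<beta> 0)" for p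
    by (simp add: star_def cr_Poly_cr[OF a1] cr_0[OF b1])
  have st2: "star \<alpha> \<beta> q (replicate \<alpha> 0, cyc_red \<beta> a) = (replicate \<alpha> 0, cyc_red \<beta> (q * a))" for q
    by (simp add: star_def cr_Poly_cr[OF b1] cr_0[OF a1])
  have va: "vadd (cyc_red \<alpha> (rd p * b), replicate \<beta> 0) (replicate \<alpha> 0, cyc_red \<beta> (q * a)) =
      (cyc_red \<alpha> (rd p * b), cyc_red \<beta> (q * a))" for p q
    using map2_add_zero_r[of "cyc_red \<alpha> (rd p * b)"] map2_add_zero_l[of "cyc_red \<beta> (q * a)"]
    by (simp add: vadd_def)
  have "gen2 \<alpha> \<beta> (cyc_red \<alpha> b, replicate \<beta> 0) (replicate \<alpha> 0, cyc_red \<beta> a) =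
      {(cyc_red \<alpha> (rd p * b), cyc_red \<beta> (q * a)) | p q. True}"
    unfolding gen2_def st1 st2 va by blast
  also have "\<dots> = {cyc_red \<alpha> (p * b) | p. True} \<times> {cyc_red \<beta> (q * a) | q. True}"
  proof
    show "{(cyc_red \<alpha> (rd p * b), cyc_red \<beta> (q * a)) | p q. True} \<subseteq> {cyc_red \<alpha> (p * b) | p. True} \<times> {cyc_red \<beta> (q * a) | q. True}"
      by blast
    show "{cyc_red \<alpha> (p * b) | p. True} \<times> {cyc_red \<beta> (q * a) | q. True} \<subseteq> {(cyc_red \<alpha> (rd p * b), cyc_red \<beta> (q * a)) | p q. True}"
    proof
      fix x assume "x \<in> {cyc_red \<alpha> (p * b) | p. True} \<times> {cyc_red \<beta> (q * a) | q. True}"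
      then obtain p q where "x = (cyc_red \<alpha> (p * b), cyc_red \<beta> (q * a))" by blast
      then have "x = (cyc_red \<alpha> (rd (lf p) * b), cyc_red \<beta> (q * a))" by (simp add: rd_lf)
      then show "x \<in> {(cyc_red \<alpha> (rd p * b), cyc_red \<beta> (q * a)) | p q. True}" by blast
    qed
  qed
  finally show ?thesis .
qed

lemma part1_fwd:
  assumes "cyclic_code \<alpha> \<beta> C"
  shows "lin_cyclic \<alpha> (CX C) \<and> lin_cyclic \<beta> (CY C)"
proof -
  have ad: "additive_code \<alpha> \<beta> C" and sh: "pi_shift ` C = C" using assms by (auto simp: cyclic_code_def)
  have sub: "C \<subseteq> ambient \<alpha> \<beta>" and z: "vzero \<alpha> \<beta> \<in> C"
    and add: "\<And>x y. x \<in> C \<Longrightarrow> y \<in> C \<Longrightarrow> vadd x y \<in> C" and neg: "\<And>x. x \<in> C \<Longrightarrow> vneg x \<in> C"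
    using ad by (auto simp: additive_code_def)
  have "shift ` CX C = CX C"
  proof -
    have "shift ` CX C = fst ` pi_shift ` C" by (force simp: CX_def pi_shift_def image_image)
    then show ?thesis using sh by (simp add: CX_def)
  qed
  moreover have "shift ` CY C = CY C"
  proof -
    have "shift ` CY C = snd ` pi_shift ` C" by (force simp: CY_def pi_shift_def image_image)
    then show ?thesis using sh by (simp add: CY_def)
  qed
  moreover have "\<forall>u\<in>CX C. length u = \<alpha>" "\<forall>u\<in>CY C. length u = \<beta>"
    using sub by (auto simp: CX_def CY_def ambient_def)
  moreover have "replicate \<alpha> 0 \<in> CX C" "replicate \<beta> 0 \<in> CY C"
    using z by (force simp: CX_def CY_def vzero_def)+
  moreover have "\<forall>u\<in>CX C. \<forall>v\<in>CX C. map2 (+) u v \<in> CX C"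
    using add by (force simp: CX_def vadd_def)
  moreover have "\<forall>u\<in>CY C. \<forall>v\<in>CY C. map2 (+) u v \<in> CY C"
    using add by (force simp: CY_def vadd_def)
  moreover have "\<forall>u\<in>CX C. map uminus u \<in> CX C"
    using neg by (force simp: CX_def vneg_def)
  moreover have "\<forall>u\<in>CY C. map uminus u \<in> CY C"
    using neg by (force simp: CY_def vneg_def)
  ultimately show ?thesis by (simp add: lin_cyclic_def)
qed

lemma part1_bwd:
  assumes "additive_code \<alpha> \<beta> C" "separable C" "lin_cyclic \<alpha> (CX C)" "lin_cyclic \<beta> (CY C)"
  shows "cyclic_code \<alpha> \<beta> C"
proof -
  have C: "C = CX C \<times> CY C" using assms(2) by (simp add: separable_def)
  have s1: "shift ` CX C = CX C" and s2: "shift ` CY C = CY C" using assms(3,4) by (auto simp: lin_cyclic_def)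
  have "pi_shift ` (CX C \<times> CY C) = shift ` CX C \<times> shift ` CY C"
    by (force simp: pi_shift_def)
  then have "pi_shift ` C = C" using C s1 s2 by metis
  then show ?thesis using assms(1) by (simp add: cyclic_code_def)
qed

theorem mainTheorem2:
  fixes \<alpha> \<beta> :: nat and C :: "z2z4vec set"
  assumes "\<alpha> \<ge> 1" and "odd \<beta>"
    and "additive_code \<alpha> \<beta> C" and "separable C"
  shows "(cyclic_code \<alpha> \<beta> C \<longleftrightarrow> lin_cyclic \<alpha> (CX C) \<and> lin_cyclic \<beta> (CY C)) \<and>
    (cyclic_code \<alpha> \<beta> C \<longrightarrow>
      (\<exists>(b :: 2 poly) (f :: 4 poly) h g.
          b dvd ([:0, 1:] ^ \<alpha> - 1) \<and> f * h * g = [:0, 1:] ^ \<beta> - 1 \<and>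
          C = gen2 \<alpha> \<beta> (cyc_red \<alpha> b, replicate \<beta> 0)
                        (replicate \<alpha> 0, cyc_red \<beta> (f * h + 2 * f))))"
proof (intro conjI impI)
  show "cyclic_code \<alpha> \<beta> C \<longleftrightarrow> lin_cyclic \<alpha> (CX C) \<and> lin_cyclic \<beta> (CY C)"
    using part1_fwd part1_bwd assms(3,4) by blast
next
  assume cyc: "cyclic_code \<alpha> \<beta> C"
  have b1: "\<beta> \<ge> 1" using assms(2) by (cases \<beta>) auto
  have lx: "lin_cyclic \<alpha> (CX C)" and ly: "lin_cyclic \<beta> (CY C)" using part1_fwd[OF cyc] by auto
  obtain b where b: "b dvd XX \<alpha>" "CX C = {cyc_red \<alpha> (p * b) | p. True}"
    using binary_gen[OF assms(1) lx] by blast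
  obtain f h g where fhg: "f * h * g = XX \<beta>" "CY C = {cyc_red \<beta> (q * (f * h + 2 * f)) | q. True}"
    using z4_gen[OF assms(2) ly] by blast
  have "C = CX C \<times> CY C" using assms(4) by (simp add: separable_def)
  also have "\<dots> = gen2 \<alpha> \<beta> (cyc_red \<alpha> b, replicate \<beta> 0) (replicate \<alpha> 0, cyc_red \<beta> (f * h + 2 * f))"
    using gen2_eq[OF assms(1) b1] b(2) fhg(2) by simp
  finally show "\<exists>(b :: 2 poly) (f :: 4 poly) h g.
          b dvd ([:0, 1:] ^ \<alpha> - 1) \<and> f * h * g = [:0, 1:] ^ \<beta> - 1 \<and>
          C = gen2 \<alpha> \<beta> (cyc_red \<alpha> b, replicate \<beta> 0)
                        (replicate \<alpha> 0, cyc_red \<beta> (f * h + 2 * f))"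
    using b(1) fhg(1) by blast
qed

end
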